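(* Let $d$ be a positive odd integer, $n=\frac{d^2+1}{2}$, and $P_m(x)=1+x+\cdots+x^{m-1}\in\mathbb{F}_2[x]$. Then: (1) $xP_d(x^d)$ is an inverse of $P_d(x)$ both modulo $x^n-1$ and modulo $P_n(x)$, i.e. $P_d(x)\cdot xP_d(x^d)\equiv 1$ modulo each of these; and this inverse $xP_d(x^d)$ has weight $d$. (2) In $\mathbb{F}_2[x]$, $$P_n(x)=P_d(x)\big(1+x^d+x^{2d}+\cdots+x^{d(\frac{d-1}{2}-1)}\big)+\big(x^{d\frac{d-1}{2}}+x^{d\frac{d-1}{2}+1}+\cdots+x^{n-1}\big).$$
   Context: Weight means number of nonzero coefficients. *)

theory Defs
  imports "HOL-Computational_Algebra.Polynomial" "HOL-Library.Z2"
begin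

definition Pm :: "nat \<Rightarrow> bit poly" where
  "Pm m = (\<Sum>i<m. monom 1 i)"

definition weight :: "bit poly \<Rightarrow> nat" where
  "weight p = card {i. coeff p i \<noteq> 0}"

end

theory Submission
  imports Defs
begin

lemma pcomp_monom1: "pcompose (monom (1::'a::comm_semiring_1) j) q = q ^ j"
  by (induction j) (auto simp: monom_Suc pcompose_pCons monom_0 pcompose_const one_pCons)

lemma Pm_add: "Pm (m + l) = Pm m + monom 1 m * Pm l"
proof -
  have "Pm (m + l) = (\<Sum>i<m. monom 1 i) + (\<Sum>i\<in>{m..<m+l}. monom (1::bit) i)"
    unfolding Pm_def lessThan_atLeast0
    by (simp add: sum.atLeastLessThan_concat)
  also have "(\<Sum>i\<in>{m..<m+l}. monom (1::bit) i) = (\<Sum>i<l. monom 1 (m + i))"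
    by (rule sum.reindex_bij_witness[of _ "\<lambda>i. i + m" "\<lambda>i. i - m"]) auto
  also have "\<dots> = monom 1 m * Pm l"
    unfolding Pm_def sum_distrib_left by (simp add: mult_monom)
  finally show ?thesis unfolding Pm_def by simp
qed

lemma Pm_comp: "pcompose (Pm b) (monom 1 a) = (\<Sum>j<b. monom 1 (a*j))"
  unfolding Pm_def pcompose_sum pcomp_monom1 monom_power by (simp add: mult.commute)

lemma Pm_mult: "Pm a * (\<Sum>j<b. monom 1 (a*j)) = Pm (a*b)"
proof (induction b)
  case 0
  then show ?case by (simp add: Pm_def)
next
  case (Suc b)
  have "Pm a * (\<Sum>j<Suc b. monom 1 (a*j)) = Pm (a*b) + monom 1 (a*b) * Pm a"
    using Suc by (simp add: distrib_left mult.commute)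
  also have "\<dots> = Pm (a * Suc b)" using Pm_add[of "a*b" a] by (simp add: add.commute)
  finally show ?case .
qed

lemma coeff_shifted:
  assumes "d > 0"
  shows "coeff (\<Sum>j<b. monom (1::bit) (d*j+1)) i = (if \<exists>j<b. i = d*j+1 then 1 else 0)"
proof (induction b)
  case 0 then show ?case by simp
next
  case (Suc b)
  show ?case
  proof (cases "i = d*b+1")
    case True
    then have "\<not> (\<exists>j<b. i = d*j+1)" using assms by auto
    then show ?thesis using Suc True by (auto simp: coeff_monom)
  next
    case False
    then have "(\<exists>j<Suc b. i = d*j+1) = (\<exists>j<b. i = d*j+1)" by (auto simp: less_Suc_eq)
    then show ?thesis using Suc False by (simp add: coeff_monom)
  qed
qed

theorem lemma2:
  fixes d n :: nat
  assumes "odd d" and "d > 0" and "n = (d^2 + 1) div 2"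
  shows "(Pm d * ([:0, 1:] * pcompose (Pm d) (monom 1 d))) mod (monom 1 n - 1)
           = 1 mod (monom 1 n - 1)
       \<and> (Pm d * ([:0, 1:] * pcompose (Pm d) (monom 1 d))) mod (Pm n) = 1 mod (Pm n)
       \<and> weight ([:0, 1:] * pcompose (Pm d) (monom 1 d)) = d
       \<and> Pm n = Pm d * (\<Sum>i < (d - 1) div 2. monom 1 (d * i))
                + (\<Sum>i \<in> {d * ((d - 1) div 2)..<n}. monom 1 i)"
proof -
  obtain k where k: "d = 2*k+1" using assms(1) oddE by blast
  have n: "n = 2*k*k + 2*k + 1" using assms(3) k by (simp add: power2_eq_square algebra_simps)
  have dd: "d*d = n + n - 1" using n k by (simp add: algebra_simps)
  have X: "[:0, 1:] = (monom 1 1 :: bit poly)" by (simp add: monom_Suc monom_0 one_pCons)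
  let ?A = "Pm d * ([:0, 1:] * pcompose (Pm d) (monom 1 d))"
  have A: "?A = monom 1 1 * Pm (d*d)"
    unfolding X Pm_comp using Pm_mult[of d d] by (simp add: ac_simps)
  have "Pm (1 + (n + n - 1)) = 1 + monom 1 1 * Pm (n+n-1)"
    using Pm_add[of 1 "n+n-1"] by (simp add: Pm_def)
  then have "?A + 1 = Pm (n + n)" using A dd n by (simp add: add.commute)
  also have "\<dots> = (monom 1 n + 1) * Pm n" using Pm_add[of n n] by (simp add: algebra_simps)
  finally have key: "?A + 1 = (monom 1 n + 1) * Pm n" .
  have o2: "(1::bit poly) + 1 = 0" by (simp add: one_pCons)
  have m1: "(- 1 :: bit poly) = 1" using o2 by (metis add_eq_0_iff)
  have sub: "?A - 1 = ?A + 1" using m1 by (metis diff_conv_add_uminus)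
  have mn: "monom 1 n - (1::bit poly) = monom 1 n + 1" using m1 by (metis diff_conv_add_uminus)
  have c1: "?A mod (monom 1 n - 1) = 1 mod (monom 1 n - 1)"
    unfolding mod_eq_dvd_iff sub mn key by simp
  have c2: "?A mod (Pm n) = 1 mod (Pm n)"
    unfolding mod_eq_dvd_iff sub key by simp
  have W: "[:0, 1:] * pcompose (Pm d) (monom 1 d) = (\<Sum>j<d. monom (1::bit) (d*j+1))"
    unfolding X Pm_comp sum_distrib_left by (simp add: mult_monom)
  have "{i. coeff ([:0, 1:] * pcompose (Pm d) (monom 1 d)) i \<noteq> 0} = (\<lambda>j. d*j+1) ` {..<d}"
    unfolding W coeff_shifted[OF assms(2)] by auto
  moreover have "inj_on (\<lambda>j. d*j+1) {..<d}" using assms(2) by (auto simp: inj_on_def)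
  ultimately have c3: "weight ([:0, 1:] * pcompose (Pm d) (monom 1 d)) = d"
    unfolding weight_def by (simp add: card_image)
  have kk: "(d - 1) div 2 = k" using k by simp
  have le: "d * k \<le> n" using k n by (simp add: algebra_simps)
  have "Pm n = Pm (d*k) + (\<Sum>i \<in> {d * k..<n}. monom 1 i)"
    unfolding Pm_def lessThan_atLeast0 using le by (simp add: sum.atLeastLessThan_concat)
  then have c4: "Pm n = Pm d * (\<Sum>i < (d - 1) div 2. monom 1 (d * i))
                + (\<Sum>i \<in> {d * ((d - 1) div 2)..<n}. monom 1 i)"
    unfolding kk Pm_mult .
  show ?thesis using c1 c2 c3 c4 by blast
qed

end
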